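(* In the standard LLP setup, for every $N\ge1$: $L(G,\gamma^{N+1}_{cons})\supseteq L(G,\gamma^N_{cons})$.
   Context: Standard LLP setup. $\Sigma=\Sigma_c\,\dot\cup\,\Sigma_{uc}$ is a finite alphabet partitioned into controllable and uncontrollable events. The plant $G$ has generated language $L(G)$ and marked language $L_m(G)$ with $L(G)=\overline{L_m(G)}$ ($\overline{M}$ = set of prefixes of strings in $M$). The legal language $K\subseteq L_m(G)$ satisfies $K=\overline{K}\cap L_m(G)$. For a prefix-closed $L$, $M$ is controllable w.r.t. $L$ if $\overline{M}\Sigma_{uc}\cap L\subseteq\overline{M}$. For a language $L$ and $s\in\Sigma^*$: $L/s=\{t: st\in L\}$; $L|_N=\{t\in L:|t|\le N\}$; $\Sigma_{L(G)}(s)=\{\sigma\in\Sigma: s\sigma\in L(G)\}$. $M^{\uparrow/s|_N}$ is the supremal sublanguage of $M$ controllable w.r.t. $L(G)/s|_N$. Conservative attitude: $f^N_{cons}(s)=[K/s|_{N-1}]^{\uparrow/s|_N}$; control policy $\gamma^N_{cons}(s)=(\overline{f^N_{cons}(s)}\cap\Sigma)\cup(\Sigma_{uc}\cap\Sigma_{L(G)}(s))$. Closed-loop language $L(G,\gamma)$: $\epsilon\in L(G,\gamma)$, and $s\sigma\in L(G,\gamma)$ iff $s\in L(G,\gamma)$, $s\sigma\in L(G)$, $\sigma\in\gamma(s)$. *)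

theory Defs
  imports Main
begin

definition pre :: "'a list set \<Rightarrow> 'a list set" where
  "pre M = {s. \<exists>t. s @ t \<in> M}"

definition quot :: "'a list set \<Rightarrow> 'a list \<Rightarrow> 'a list set" where
  "quot L s = {t. s @ t \<in> L}"

definition trunc :: "'a list set \<Rightarrow> nat \<Rightarrow> 'a list set" where
  "trunc L N = {t \<in> L. length t \<le> N}"

definition enabled :: "'a list set \<Rightarrow> 'a list \<Rightarrow> 'a set" where
  "enabled L s = {\<sigma>. s @ [\<sigma>] \<in> L}"

definition controllable :: "'a set \<Rightarrow> 'a list set \<Rightarrow> 'a list set \<Rightarrow> bool" where
  "controllable Suc' L M \<longleftrightarrow>
     (\<forall>s \<in> pre M. \<forall>\<sigma> \<in> Suc'. s @ [\<sigma>] \<in> L \<longrightarrow> s @ [\<sigma>] \<in> pre M)"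

definition supcon :: "'a set \<Rightarrow> 'a list set \<Rightarrow> 'a list set \<Rightarrow> 'a list set" where
  "supcon Suc' L M = \<Union>{M'. M' \<subseteq> M \<and> controllable Suc' L M'}"

definition f_cons :: "'a set \<Rightarrow> 'a list set \<Rightarrow> 'a list set \<Rightarrow> nat \<Rightarrow> 'a list \<Rightarrow> 'a list set" where
  "f_cons Suc' LG K N s = supcon Suc' (trunc (quot LG s) N) (trunc (quot K s) (N - 1))"

definition gamma_cons :: "'a set \<Rightarrow> 'a set \<Rightarrow> 'a list set \<Rightarrow> 'a list set \<Rightarrow> nat \<Rightarrow> 'a list \<Rightarrow> 'a set" where
  "gamma_cons Sig Suc' LG K N s =
     {\<sigma> \<in> Sig. [\<sigma>] \<in> pre (f_cons Suc' LG K N s)} \<union> (Suc' \<inter> enabled LG s)"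

inductive_set closed_loop :: "'a list set \<Rightarrow> ('a list \<Rightarrow> 'a set) \<Rightarrow> 'a list set"
  for LG :: "'a list set" and \<gamma> :: "'a list \<Rightarrow> 'a set" where
  eps: "[] \<in> closed_loop LG \<gamma>"
| step: "s \<in> closed_loop LG \<gamma> \<Longrightarrow> s @ [\<sigma>] \<in> LG \<Longrightarrow> \<sigma> \<in> \<gamma> s \<Longrightarrow> s @ [\<sigma>] \<in> closed_loop LG \<gamma>"

end

theory Submission
  imports Defs
begin

lemma ctrl_mono:
  assumes "M' \<subseteq> trunc Kq (N - 1)" "controllable S (trunc Q N) M'" "N \<ge> 1"
  shows "controllable S (trunc Q (Suc N)) M'"
  unfolding controllable_def
proof (intro ballI impI)
  fix s' \<sigma> assume s': "s' \<in> pre M'" and \<sigma>: "\<sigma> \<in> S" and m: "s' @ [\<sigma>] \<in> trunc Q (Suc N)"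
  from s' obtain t where "s' @ t \<in> M'" unfolding pre_def by auto
  with assms(1) have "length (s' @ t) \<le> N - 1" unfolding trunc_def by auto
  hence "length (s' @ [\<sigma>]) \<le> N" using assms(3) by simp
  with m have "s' @ [\<sigma>] \<in> trunc Q N" unfolding trunc_def by auto
  with assms(2) s' \<sigma> show "s' @ [\<sigma>] \<in> pre M'" unfolding controllable_def by blast
qed

lemma f_mono:
  assumes "N \<ge> 1"
  shows "f_cons S LG K N s \<subseteq> f_cons S LG K (Suc N) s"
proof
  fix x assume "x \<in> f_cons S LG K N s"
  then obtain M' where x: "x \<in> M'" and M': "M' \<subseteq> trunc (quot K s) (N - 1)"
    and c: "controllable S (trunc (quot LG s) N) M'"
    unfolding f_cons_def supcon_def by auto
  have "controllable S (trunc (quot LG s) (Suc N)) M'" using ctrl_mono[OF M' c assms] .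
  moreover have "M' \<subseteq> trunc (quot K s) (Suc N - 1)" using M' unfolding trunc_def by auto
  ultimately show "x \<in> f_cons S LG K (Suc N) s" using x unfolding f_cons_def supcon_def by auto
qed

lemma pre_mono': "A \<subseteq> B \<Longrightarrow> pre A \<subseteq> pre B"
  unfolding pre_def by auto

lemma gamma_mono:
  assumes "N \<ge> 1"
  shows "gamma_cons Sig S LG K N s \<subseteq> gamma_cons Sig S LG K (Suc N) s"
  using pre_mono'[OF f_mono[OF assms, of S LG K s]]
  unfolding gamma_cons_def by auto

theorem theorem5:
  fixes Sc Suc' :: "'a set" and Lm K :: "'a list set" and N :: nat
  assumes "finite (Sc \<union> Suc')"
    and "Sc \<inter> Suc' = {}"
    and "Lm \<subseteq> lists (Sc \<union> Suc')"
    and "K \<subseteq> Lm"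
    and "K = pre K \<inter> Lm"
    and "N \<ge> 1"
  shows "closed_loop (pre Lm) (gamma_cons (Sc \<union> Suc') Suc' (pre Lm) K N)
         \<subseteq> closed_loop (pre Lm) (gamma_cons (Sc \<union> Suc') Suc' (pre Lm) K (Suc N))"
proof
  fix x assume "x \<in> closed_loop (pre Lm) (gamma_cons (Sc \<union> Suc') Suc' (pre Lm) K N)"
  then show "x \<in> closed_loop (pre Lm) (gamma_cons (Sc \<union> Suc') Suc' (pre Lm) K (Suc N))"
  proof induct
    case eps then show ?case by (rule closed_loop.eps)
  next
    case (step s \<sigma>)
    have "\<sigma> \<in> gamma_cons (Sc \<union> Suc') Suc' (pre Lm) K (Suc N) s"
      by (rule subsetD[OF gamma_mono[OF assms(6)] step(4)])
    then show ?case using step(2,3) by (rule closed_loop.step[rotated 2])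
  qed
qed

end
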